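(* Let $\epsilon_1>0$, $n\ge1$, let $u$ be a utility function on contexts of sensitivity $\Delta u\le1$ (context population size or overlap with a fixed starting context, $-\infty$ on non-matching contexts), and let $C_V$ be a starting context with $f_M(D_{C_V},V)=\mathrm{true}$. Consider the Depth-First Search Sampling algorithm: initialize a stack containing $C_V$ and $\mathrm{Visited}=\emptyset$; while $|\mathrm{Visited}|\le n$ and the stack is nonempty: let $C$ be the top of the stack, add $C$ to $\mathrm{Visited}$, let $\mathrm{Ch}$ be the set of contexts connected to $C$ that are matching for $V$ and not in $\mathrm{Visited}$; if $\mathrm{Ch}=\emptyset$ pop the stack, otherwise push $\mathrm{Exp}^{\epsilon_1}_u(D,\mathrm{Ch})$ onto the stack. Finally output $\mathrm{Exp}^{\epsilon_1}_u(D,\mathrm{Visited})$. Then this algorithm satisfies $((2n+2)\epsilon_1,\ COE_M(\cdot,V))$-Output Constrained Differential Privacy.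
   Context: Dataset $D$ over categorical attributes $A_1,\dots,A_m$ (domain sizes $|A_i|$, all possible values) and metric attribute $M$; $t=\sum_i|A_i|$. A context is a binary vector of length $t$, $c_{ij}=1$ meaning the $j$-th value of $A_i$ is selected; $D_C$ is the set of tuples of $D$ whose value in every $A_i$ is selected by $C$. Two contexts are connected if their Hamming distance is $1$. $f_M(D_C,V)$ is a deterministic test of whether record $V$ is an outlier in $D_C$ w.r.t. $M$; a context is matching if this is true. $COE_M(D,V)$ is the set of contexts $C$ with $V\in D_C$ and $f_M(D_C,V)=\mathrm{true}$. Sensitivity $\Delta u=\max|u(D_1,r)-u(D_2,r)|$ over neighboring datasets (differing by adding/removing one record) and outputs $r$. $\mathrm{Exp}^{\epsilon}_u(D,\mathcal R)$ outputs $r\in\mathcal R$ with probability $\exp(\epsilon u(D,r)/(2\Delta u))/\sum_{r'\in\mathcal R}\exp(\epsilon u(D,r')/(2\Delta u))$. $D_1,D_2$ are $f$-neighbors if they differ by adding/removing one record and $f(D_1)=f(D_2)\ne\emptyset$; $\mathcal M$ satisfies $(\epsilon,f)$-Output Constrained Differential Privacy if $\Pr[\mathcal M(D_1)\in S]\le e^\epsilon\Pr[\mathcal M(D_2)\in S]$ for all $f$-neighbors and all output sets $S$. *)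

theory Defs
  imports "HOL-Probability.Probability" "HOL-Library.Multiset"
begin

text \<open>A context is a binary vector of length t = sum of the domain sizes; we represent it
  by the set of selected positions (i,j), i < m, j < dsz i (the j-th value of attribute A_i).\<close>
type_synonym ctx = "(nat \<times> nat) set"

definition positions :: "nat \<Rightarrow> (nat \<Rightarrow> nat) \<Rightarrow> (nat \<times> nat) set" where
  "positions m dsz = {(i, j). i < m \<and> j < dsz i}"

definition contexts :: "nat \<Rightarrow> (nat \<Rightarrow> nat) \<Rightarrow> ctx set" where
  "contexts m dsz = Pow (positions m dsz)"

text \<open>Hamming distance 1 = symmetric difference of the selected positions has one element.\<close>
definition connected :: "ctx \<Rightarrow> ctx \<Rightarrow> bool" where
  "connected C C' \<longleftrightarrow> card ((C - C') \<union> (C' - C)) = 1"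

text \<open>D_C: tuples of D whose value in every attribute is selected by C.
  attr r i is the index of the value of record r in attribute A_i.\<close>
definition sub_data :: "nat \<Rightarrow> ('r \<Rightarrow> nat \<Rightarrow> nat) \<Rightarrow> 'r multiset \<Rightarrow> ctx \<Rightarrow> 'r multiset" where
  "sub_data m attr D C = filter_mset (\<lambda>r. \<forall>i<m. (i, attr r i) \<in> C) D"

text \<open>COE_M(D,V); the outlier test f_M is an arbitrary deterministic function f.\<close>
definition COE :: "nat \<Rightarrow> (nat \<Rightarrow> nat) \<Rightarrow> ('r \<Rightarrow> nat \<Rightarrow> nat) \<Rightarrow> ('r multiset \<Rightarrow> 'r \<Rightarrow> bool)
                   \<Rightarrow> 'r multiset \<Rightarrow> 'r \<Rightarrow> ctx set" where
  "COE m dsz attr f D V =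
     {C \<in> contexts m dsz. V \<in># sub_data m attr D C \<and> f (sub_data m attr D C) V}"

definition neighbors :: "'r multiset \<Rightarrow> 'r multiset \<Rightarrow> bool" where
  "neighbors D1 D2 \<longleftrightarrow> (\<exists>x. D2 = add_mset x D1 \<or> D1 = add_mset x D2)"

definition sensitivity_set :: "'o set \<Rightarrow> ('r multiset \<Rightarrow> 'o \<Rightarrow> real) \<Rightarrow> real set" where
  "sensitivity_set R u = {\<bar>u D1 r - u D2 r\<bar> | D1 D2 r. neighbors D1 D2 \<and> r \<in> R}"

definition sensitivity :: "'o set \<Rightarrow> ('r multiset \<Rightarrow> 'o \<Rightarrow> real) \<Rightarrow> real" where
  "sensitivity R u = Sup (sensitivity_set R u)"

definition exp_mech :: "real \<Rightarrow> real \<Rightarrow> ('d \<Rightarrow> 'o \<Rightarrow> real) \<Rightarrow> 'd \<Rightarrow> 'o set \<Rightarrow> 'o pmf" where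
  "exp_mech \<epsilon> \<Delta> u D R = embed_pmf (\<lambda>r. if r \<in> R
       then exp (\<epsilon> * u D r / (2 * \<Delta>)) / (\<Sum>r'\<in>R. exp (\<epsilon> * u D r' / (2 * \<Delta>))) else 0)"

definition f_neighbors :: "('d multiset \<Rightarrow> 'c set) \<Rightarrow> 'd multiset \<Rightarrow> 'd multiset \<Rightarrow> bool" where
  "f_neighbors f D1 D2 \<longleftrightarrow> neighbors D1 D2 \<and> f D1 = f D2 \<and> f D1 \<noteq> {}"

text \<open>(eps,f)-OCDP, for a mechanism defined on the input domain described by Dom.\<close>
definition ocdp_on :: "('d multiset \<Rightarrow> bool) \<Rightarrow> real \<Rightarrow> ('d multiset \<Rightarrow> 'c set)
                        \<Rightarrow> ('d multiset \<Rightarrow> 'o pmf) \<Rightarrow> bool" where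
  "ocdp_on Dom \<epsilon> f M \<longleftrightarrow> (\<forall>D1 D2. f_neighbors f D1 D2 \<and> Dom D1 \<and> Dom D2 \<longrightarrow>
      (\<forall>S. measure_pmf.prob (M D1) S \<le> exp \<epsilon> * measure_pmf.prob (M D2) S))"

text \<open>One iteration of the DFS loop body. State = (stack, Visited); head of list = top.\<close>
definition dfs_step :: "(ctx \<Rightarrow> bool) \<Rightarrow> (ctx set \<Rightarrow> ctx pmf) \<Rightarrow> ctx list \<times> ctx set
                        \<Rightarrow> (ctx list \<times> ctx set) pmf" where
  "dfs_step match sel st = (case st of
      ([], Vis) \<Rightarrow> return_pmf st
    | (C # S, Vis) \<Rightarrow>
        (let Vis' = insert C Vis;
             Ch = {C'. connected C C' \<and> match C' \<and> C' \<notin> Vis'}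
         in if Ch = {} then return_pmf (S, Vis')
            else map_pmf (\<lambda>c. (c # C # S, Vis')) (sel Ch)))"

text \<open>The while loop (condition |Visited| \<le> n and stack nonempty), run with a fuel bound.\<close>
fun dfs_loop :: "nat \<Rightarrow> nat \<Rightarrow> (ctx \<Rightarrow> bool) \<Rightarrow> (ctx set \<Rightarrow> ctx pmf) \<Rightarrow> ctx list \<times> ctx set
                  \<Rightarrow> (ctx list \<times> ctx set) pmf" where
  "dfs_loop n 0 match sel st = return_pmf st"
| "dfs_loop n (Suc k) match sel st =
     (if card (snd st) \<le> n \<and> fst st \<noteq> []
      then bind_pmf (dfs_step match sel st) (dfs_loop n k match sel)
      else return_pmf st)"

text \<open>Depth-First Search Sampling. The fuel 2 * (number of contexts) + 2 exceeds the
  number of loop iterations the algorithm can ever perform, so the loop always terminates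
  via its own condition.\<close>
definition dfs_sampling :: "real \<Rightarrow> ('r multiset \<Rightarrow> ctx \<Rightarrow> real) \<Rightarrow> nat \<Rightarrow> (nat \<Rightarrow> nat)
      \<Rightarrow> ('r \<Rightarrow> nat \<Rightarrow> nat) \<Rightarrow> ('r multiset \<Rightarrow> 'r \<Rightarrow> bool) \<Rightarrow> nat \<Rightarrow> 'r \<Rightarrow> ctx
      \<Rightarrow> 'r multiset \<Rightarrow> ctx pmf" where
  "dfs_sampling \<epsilon>1 u m dsz attr f n V CV D =
     (let \<Delta> = sensitivity (contexts m dsz) u;
          match = (\<lambda>C. C \<in> COE m dsz attr f D V);
          sel = exp_mech \<epsilon>1 \<Delta> u D;
          fuel = 2 * card (contexts m dsz) + 2
      in bind_pmf (dfs_loop n fuel match sel ([CV], {})) (\<lambda>st. sel (snd st)))"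

end

theory Submission
  imports Defs
begin

lemma pmf_bind_bound:
  fixes a b :: real
  assumes a: "a \<ge> 0" and b: "b \<ge> 0"
    and h1: "\<And>x. pmf p1 x \<le> a * pmf p2 x"
    and h2: "\<And>x. x \<in> set_pmf p1 \<Longrightarrow> pmf (f1 x) y \<le> b * pmf (f2 x) y"
  shows "pmf (bind_pmf p1 f1) y \<le> a * b * pmf (bind_pmf p2 f2) y"
proof -
  have "ennreal (pmf (bind_pmf p1 f1) y) = (\<integral>\<^sup>+x. ennreal (pmf p1 x) * ennreal (pmf (f1 x) y) \<partial>count_space UNIV)"
    by (simp add: ennreal_pmf_bind nn_integral_measure_pmf)
  also have "\<dots> \<le> (\<integral>\<^sup>+x. ennreal (a * b) * (ennreal (pmf p2 x) * ennreal (pmf (f2 x) y)) \<partial>count_space UNIV)"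
  proof (rule nn_integral_mono)
    fix x
    show "ennreal (pmf p1 x) * ennreal (pmf (f1 x) y) \<le> ennreal (a * b) * (ennreal (pmf p2 x) * ennreal (pmf (f2 x) y))"
    proof (cases "x \<in> set_pmf p1")
      case True
      have "pmf p1 x * pmf (f1 x) y \<le> (a * pmf p2 x) * (b * pmf (f2 x) y)"
        by (rule mult_mono) (use h1 h2[OF True] a b in auto)
      then show ?thesis
        by (simp add: ennreal_mult'[symmetric] mult_ac a b ennreal_leI)
    next
      case False
      then show ?thesis by (simp add: set_pmf_eq)
    qed
  qed
  also have "\<dots> = ennreal (a * b) * (\<integral>\<^sup>+x. ennreal (pmf p2 x) * ennreal (pmf (f2 x) y) \<partial>count_space UNIV)"
    by (rule nn_integral_cmult) simp
  also have "\<dots> = ennreal (a * b * pmf (bind_pmf p2 f2) y)"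
    by (simp add: ennreal_pmf_bind nn_integral_measure_pmf ennreal_mult' a b)
  finally show ?thesis
    by (subst (asm) ennreal_le_iff) (use a b in auto)
qed

lemma prob_bound:
  fixes c :: real
  assumes c: "c \<ge> 0" and h: "\<And>x. pmf p x \<le> c * pmf q x"
  shows "measure_pmf.prob p S \<le> c * measure_pmf.prob q S"
proof -
  have "emeasure (measure_pmf p) S = (\<integral>\<^sup>+ x. ennreal (pmf p x) \<partial>count_space S)"
    by (simp add: nn_integral_pmf)
  also have "\<dots> \<le> (\<integral>\<^sup>+ x. ennreal c * ennreal (pmf q x) \<partial>count_space S)"
    by (rule nn_integral_mono) (use h c in \<open>simp add: ennreal_mult'[symmetric]\<close>)
  also have "\<dots> = ennreal c * emeasure (measure_pmf q) S"
    by (simp add: nn_integral_cmult nn_integral_pmf)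
  also have "\<dots> = ennreal (c * measure_pmf.prob q S)"
    by (simp add: measure_pmf.emeasure_eq_measure ennreal_mult' c)
  finally show ?thesis
    by (simp add: measure_pmf.emeasure_eq_measure c)
qed

lemma exp_mech_pmf:
  assumes "finite R" "R \<noteq> {}"
  shows "pmf (exp_mech e d u D R) x = (if x \<in> R
       then exp (e * u D x / (2 * d)) / (\<Sum>r'\<in>R. exp (e * u D r' / (2 * d))) else 0)"
    and "set_pmf (exp_mech e d u D R) \<subseteq> R"
proof -
  let ?g = "(\<lambda>r. if r \<in> R
       then exp (e * u D r / (2 * d)) / (\<Sum>r'\<in>R. exp (e * u D r' / (2 * d))) else 0)"
  have pos: "(\<Sum>r'\<in>R. exp (e * u D r' / (2 * d))) > 0"
    using assms by (intro sum_pos) auto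
  have nn: "\<And>x. 0 \<le> ?g x" using pos by auto
  have "(\<integral>\<^sup>+x. ennreal (?g x) \<partial>count_space UNIV) = (\<integral>\<^sup>+x. ennreal (?g x) * indicator R x \<partial>count_space UNIV)"
    by (intro nn_integral_cong) (auto split: split_indicator)
  also have "\<dots> = (\<integral>\<^sup>+x. ennreal (?g x) \<partial>count_space R)"
    by (simp add: nn_integral_count_space_indicator)
  also have "\<dots> = (\<Sum>x\<in>R. ennreal (?g x))"
    using assms by (simp add: nn_integral_count_space_finite)
  also have "\<dots> = ennreal (\<Sum>x\<in>R. ?g x)"
    using pos by (intro sum_ennreal) (auto intro!: divide_nonneg_pos)
  also have "(\<Sum>x\<in>R. ?g x) = 1"
    using pos by (simp add: sum_divide_distrib[symmetric])
  finally have one: "(\<integral>\<^sup>+x. ennreal (?g x) \<partial>count_space UNIV) = 1" by simp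
  show "pmf (exp_mech e d u D R) x = ?g x"
    unfolding exp_mech_def by (rule pmf_embed_pmf[OF nn one])
  show "set_pmf (exp_mech e d u D R) \<subseteq> R"
    unfolding exp_mech_def by (subst set_embed_pmf[OF nn one]) auto
qed

lemma exp_mech_bound:
  fixes e d :: real
  assumes e: "e \<ge> 0" and d: "d \<ge> 0" and fin: "finite R"
    and diff: "\<And>r. r \<in> R \<Longrightarrow> \<bar>u D1 r - u D2 r\<bar> \<le> d"
  shows "pmf (exp_mech e d u D1 R) x \<le> exp e * pmf (exp_mech e d u D2 R) x"
proof (cases "R = {}")
  case True
  have "exp_mech e d u D1 R = exp_mech e d u D2 R"
    unfolding exp_mech_def True by simp
  moreover have "1 \<le> exp e" using e by simp
  ultimately show ?thesis
    by (metis mult_le_cancel_right1 pmf_nonneg order_trans order_refl mult.commute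
        mult_right_mono)
next
  case False
  define w1 where "w1 r = exp (e * u D1 r / (2 * d))" for r
  define w2 where "w2 r = exp (e * u D2 r / (2 * d))" for r
  have key: "e * u Da r / (2 * d) \<le> e * u Db r / (2 * d) + e / 2"
    if "\<bar>u Da r - u Db r\<bar> \<le> d" for Da Db r
  proof (cases "d = 0")
    case True then show ?thesis using e by simp
  next
    case False
    then have dp: "d > 0" using d by simp
    have "e * (u Da r - u Db r) \<le> e * d"
      using that e by (intro mult_left_mono) auto
    then have "e * (u Da r - u Db r) / (2 * d) \<le> e * d / (2 * d)"
      using dp by (intro divide_right_mono) auto
    then show ?thesis using dp by (simp add: field_simps)
  qed
  have w12: "w1 r \<le> exp (e/2) * w2 r" if "r \<in> R" for r
    unfolding w1_def w2_def exp_add[symmetric] using key[of D1 r D2] diff[OF that] by (simp add: add.commute)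
  have w21: "w2 r \<le> exp (e/2) * w1 r" if "r \<in> R" for r
    unfolding w1_def w2_def exp_add[symmetric] using key[of D2 r D1] diff[OF that] by (simp add: add.commute abs_minus_commute)
  have s1: "sum w1 R > 0" "sum w2 R > 0"
    using fin False unfolding w1_def w2_def by (auto intro!: sum_pos)
  have s21: "sum w2 R \<le> exp (e/2) * sum w1 R"
    unfolding sum_distrib_left by (rule sum_mono) (rule w21)
  show ?thesis
  proof (cases "x \<in> R")
    case False
    then show ?thesis by (simp add: exp_mech_pmf(1)[OF fin \<open>R \<noteq> {}\<close>])
  next
    case True
    have p1: "pmf (exp_mech e d u D1 R) x = w1 x / sum w1 R"
      using True unfolding w1_def by (simp add: exp_mech_pmf(1)[OF fin \<open>R \<noteq> {}\<close>])
    have p2: "pmf (exp_mech e d u D2 R) x = w2 x / sum w2 R"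
      using True unfolding w2_def by (simp add: exp_mech_pmf(1)[OF fin \<open>R \<noteq> {}\<close>])
    have "w1 x / sum w1 R \<le> (exp (e/2) * w2 x) / (sum w2 R / exp (e/2))"
    proof (rule frac_le)
      show "0 \<le> exp (e / 2) * w2 x" unfolding w2_def by simp
      show "w1 x \<le> exp (e / 2) * w2 x" by (rule w12[OF True])
      show "0 < sum w2 R / exp (e / 2)" using s1 by simp
      show "sum w2 R / exp (e / 2) \<le> sum w1 R" using s21 by (simp add: field_simps)
    qed
    also have "\<dots> = exp (e/2) * exp (e/2) * (w2 x / sum w2 R)" by simp
    also have "exp (e/2) * exp (e/2) = exp e" by (simp add: exp_add[symmetric])
    finally show ?thesis using p1 p2 by simp
  qed
qed

definition phi :: "ctx list \<times> ctx set \<Rightarrow> nat" where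
  "phi st = card (snd st) + (if fst st \<noteq> [] \<and> hd (fst st) \<notin> snd st then 1 else 0)"

lemma loop_bound:
  fixes e :: real
  assumes e: "e \<ge> 0"
    and sel: "\<And>R x. R \<subseteq> P \<Longrightarrow> pmf (sel1 R) x \<le> exp e * pmf (sel2 R) x"
    and selset: "\<And>R. R \<subseteq> P \<Longrightarrow> R \<noteq> {} \<Longrightarrow> set_pmf (sel1 R) \<subseteq> R"
    and mP: "\<And>C. match C \<Longrightarrow> C \<in> P"
  shows "finite (snd st) \<Longrightarrow> card (snd st) \<le> n+1 \<Longrightarrow> set (fst st) \<subseteq> P \<Longrightarrow> snd st \<subseteq> P \<Longrightarrow>
    pmf (bind_pmf (dfs_loop n k match sel1 st) (\<lambda>s. sel1 (snd s))) y
      \<le> exp (e * real (n + 3 - phi st)) * pmf (bind_pmf (dfs_loop n k match sel2 st) (\<lambda>s. sel2 (snd s))) y"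
proof (induction k arbitrary: st)
  have termb: "pmf (sel1 (snd st)) y \<le> exp (e * real (n + 3 - phi st)) * pmf (sel2 (snd st)) y"
    if "card (snd st) \<le> n+1" "snd st \<subseteq> P" for st
  proof -
    have "phi st \<le> n + 2" using that unfolding phi_def by auto
    then have "exp e \<le> exp (e * real (n + 3 - phi st))" using e by (auto intro!: mult_left_mono[of 1 _ e, simplified])
    then show ?thesis
      using sel[OF that(2), of y] by (meson order_trans mult_right_mono pmf_nonneg)
  qed
  {
    case 0
    then show ?case using termb by (simp add: bind_return_pmf)
  next
    case (Suc k)
    show ?case
    proof (cases "card (snd st) \<le> n \<and> fst st \<noteq> []")
      case False
      then show ?thesis using termb Suc.prems by (auto simp add: bind_return_pmf)
    next
      case True
      then obtain C S Vis where st: "st = (C # S, Vis)" and cn: "card Vis \<le> n"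
        by (metis list.exhaust prod.collapse)
      have fin: "finite Vis" "C \<in> P" "set S \<subseteq> P" "Vis \<subseteq> P" using Suc.prems st by auto
      define Vis' where "Vis' = insert C Vis"
      define Ch where "Ch = {C'. connected C C' \<and> match C' \<and> C' \<notin> Vis'}"
      have ChP: "Ch \<subseteq> P" using mP unfolding Ch_def by auto
      have loopeq: "\<And>sl. dfs_loop n (Suc k) match sl st = bind_pmf (dfs_step match sl st) (dfs_loop n k match sl)"
        using True by simp
      have stepeq: "\<And>sl. dfs_step match sl st = (if Ch = {} then return_pmf (S, Vis')
            else map_pmf (\<lambda>c. (c # C # S, Vis')) (sl Ch))"
        unfolding dfs_step_def st Ch_def Vis'_def by (simp add: Let_def)
      have cardV': "card Vis' \<le> n + 1" "finite Vis'" "Vis' \<subseteq> P"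
        using cn fin unfolding Vis'_def by (auto simp: card_insert_if)
      have phist: "phi st = card Vis + (if C \<notin> Vis then 1 else 0)" unfolding phi_def st by simp
      have phiV': "card Vis' = card Vis + (if C \<notin> Vis then 1 else 0)"
        unfolding Vis'_def using fin by (simp add: card_insert_if)
      show ?thesis
      proof (cases "Ch = {}")
        case True
        have IH: "pmf (bind_pmf (dfs_loop n k match sel1 (S, Vis')) (\<lambda>s. sel1 (snd s))) y
          \<le> exp (e * real (n + 3 - phi (S, Vis'))) * pmf (bind_pmf (dfs_loop n k match sel2 (S, Vis')) (\<lambda>s. sel2 (snd s))) y"
          using Suc.IH[of "(S, Vis')"] cardV' fin by auto
        have "phi st \<le> phi (S, Vis')" using phist phiV' unfolding phi_def by simp
        then have "exp (e * real (n + 3 - phi (S, Vis'))) \<le> exp (e * real (n + 3 - phi st))"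
          using e by (auto intro!: mult_left_mono)
        then have "exp (e * real (n + 3 - phi (S, Vis'))) * pmf (bind_pmf (dfs_loop n k match sel2 (S, Vis')) (\<lambda>s. sel2 (snd s))) y
           \<le> exp (e * real (n + 3 - phi st)) * pmf (bind_pmf (dfs_loop n k match sel2 (S, Vis')) (\<lambda>s. sel2 (snd s))) y"
          by (intro mult_right_mono) auto
        with IH show ?thesis
          unfolding loopeq stepeq using True by (simp add: bind_assoc_pmf bind_return_pmf)
      next
        case False
        have php: "phi st \<le> n + 1" using phist cn by auto
        have "pmf (bind_pmf (sel1 Ch) (\<lambda>c. bind_pmf (dfs_loop n k match sel1 (c # C # S, Vis')) (\<lambda>s. sel1 (snd s)))) y
          \<le> exp e * exp (e * real (n + 3 - (phi st + 1))) * pmf (bind_pmf (sel2 Ch) (\<lambda>c. bind_pmf (dfs_loop n k match sel2 (c # C # S, Vis')) (\<lambda>s. sel2 (snd s)))) y"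
        proof (rule pmf_bind_bound)
          show "\<And>x. pmf (sel1 Ch) x \<le> exp e * pmf (sel2 Ch) x" using sel[OF ChP] .
        next
          fix c assume "c \<in> set_pmf (sel1 Ch)"
          then have c: "c \<in> Ch" using selset[OF ChP False] by auto
          then have "c \<notin> Vis'" "c \<in> P" using ChP unfolding Ch_def by auto
          then have "phi (c # C # S, Vis') = phi st + 1" using phist phiV' unfolding phi_def by simp
          then show "pmf (bind_pmf (dfs_loop n k match sel1 (c # C # S, Vis')) (\<lambda>s. sel1 (snd s))) y
            \<le> exp (e * real (n + 3 - (phi st + 1))) * pmf (bind_pmf (dfs_loop n k match sel2 (c # C # S, Vis')) (\<lambda>s. sel2 (snd s))) y"
            using Suc.IH[of "(c # C # S, Vis')"] cardV' fin \<open>c \<in> P\<close> by auto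
        qed auto
        also have "exp e * exp (e * real (n + 3 - (phi st + 1))) = exp (e * real (n + 3 - phi st))"
          using php by (simp add: exp_add[symmetric] of_nat_diff algebra_simps)
        finally show ?thesis
          unfolding loopeq stepeq using False by (simp add: bind_assoc_pmf bind_map_pmf)
      qed
    qed
  }
qed

lemma finite_contexts: "finite (contexts m dsz)"
proof -
  have "positions m dsz \<subseteq> (SIGMA i:{..<m}. {..<dsz i})" unfolding positions_def by auto
  then have "finite (positions m dsz)" by (rule finite_subset) auto
  then show ?thesis unfolding contexts_def by simp
qed

theorem theorem8:
  fixes m :: nat and dsz :: "nat \<Rightarrow> nat" and attr :: "'r \<Rightarrow> nat \<Rightarrow> nat"
    and f :: "'r multiset \<Rightarrow> 'r \<Rightarrow> bool" and u :: "'r multiset \<Rightarrow> ctx \<Rightarrow> real"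
    and V :: 'r and CV :: ctx and n :: nat and \<epsilon>1 :: real
  assumes "\<epsilon>1 > 0" and "n \<ge> 1"
    and "\<forall>r i. i < m \<longrightarrow> attr r i < dsz i"
    and "bdd_above (sensitivity_set (contexts m dsz) u)"
    and "sensitivity (contexts m dsz) u \<le> 1"
    and "CV \<in> contexts m dsz"
  shows "ocdp_on (\<lambda>D. CV \<in> COE m dsz attr f D V) ((2 * real n + 2) * \<epsilon>1)
           (\<lambda>D. COE m dsz attr f D V) (dfs_sampling \<epsilon>1 u m dsz attr f n V CV)"
  unfolding ocdp_on_def
proof (intro allI impI)
  fix D1 D2 S
  assume H: "f_neighbors (\<lambda>D. COE m dsz attr f D V) D1 D2 \<and> CV \<in> COE m dsz attr f D1 V \<and> CV \<in> COE m dsz attr f D2 V"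
  then have nb: "neighbors D1 D2" and eqC: "COE m dsz attr f D1 V = COE m dsz attr f D2 V"
    unfolding f_neighbors_def by auto
  define \<Delta> where "\<Delta> = sensitivity (contexts m dsz) u"
  define match where "match = (\<lambda>C. C \<in> COE m dsz attr f D1 V)"
  have match2: "(\<lambda>C. C \<in> COE m dsz attr f D2 V) = match" unfolding match_def eqC ..
  have diff: "\<bar>u D1 r - u D2 r\<bar> \<le> \<Delta>" if "r \<in> contexts m dsz" for r
  proof -
    have "\<bar>u D1 r - u D2 r\<bar> \<in> sensitivity_set (contexts m dsz) u"
      unfolding sensitivity_set_def using nb that by blast
    then show ?thesis unfolding \<Delta>_def sensitivity_def by (rule cSup_upper[OF _ assms(4)])
  qed
  have \<Delta>0: "\<Delta> \<ge> 0" using diff[OF assms(6)] by linarith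
  have P: "\<And>C. match C \<Longrightarrow> C \<in> contexts m dsz" unfolding match_def COE_def by auto
  have lb: "pmf (bind_pmf (dfs_loop n k match (exp_mech \<epsilon>1 \<Delta> u D1) ([CV], {})) (\<lambda>s. exp_mech \<epsilon>1 \<Delta> u D1 (snd s))) y
      \<le> exp (\<epsilon>1 * real (n + 3 - phi ([CV], {}))) * pmf (bind_pmf (dfs_loop n k match (exp_mech \<epsilon>1 \<Delta> u D2) ([CV], {})) (\<lambda>s. exp_mech \<epsilon>1 \<Delta> u D2 (snd s))) y"
    for k y
  proof (rule loop_bound[where P = "contexts m dsz"])
    show "0 \<le> \<epsilon>1" using assms(1) by simp
    show "pmf (exp_mech \<epsilon>1 \<Delta> u D1 R) x \<le> exp \<epsilon>1 * pmf (exp_mech \<epsilon>1 \<Delta> u D2 R) x"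
      if "R \<subseteq> contexts m dsz" for R x
      using that assms(1) \<Delta>0 diff finite_subset[OF that finite_contexts]
      by (intro exp_mech_bound) auto
    show "set_pmf (exp_mech \<epsilon>1 \<Delta> u D1 R) \<subseteq> R" if "R \<subseteq> contexts m dsz" "R \<noteq> {}" for R
      using exp_mech_pmf(2)[OF finite_subset[OF that(1) finite_contexts] that(2)] .
  qed (use P assms(6) in auto)
  have ph: "phi ([CV], {}) = 1" unfolding phi_def by simp
  have ex: "exp (\<epsilon>1 * real (n + 3 - phi ([CV], {}))) \<le> exp ((2 * real n + 2) * \<epsilon>1)"
    unfolding ph using assms(1,2) by (simp add: of_nat_diff algebra_simps)
  have pw: "pmf (dfs_sampling \<epsilon>1 u m dsz attr f n V CV D1) y
      \<le> exp ((2 * real n + 2) * \<epsilon>1) * pmf (dfs_sampling \<epsilon>1 u m dsz attr f n V CV D2) y" for y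
  proof -
    have "pmf (dfs_sampling \<epsilon>1 u m dsz attr f n V CV D1) y
      \<le> exp (\<epsilon>1 * real (n + 3 - phi ([CV], {}))) * pmf (dfs_sampling \<epsilon>1 u m dsz attr f n V CV D2) y"
    proof -
      have e1: "dfs_sampling \<epsilon>1 u m dsz attr f n V CV D1 = bind_pmf (dfs_loop n (2 * card (contexts m dsz) + 2) match (exp_mech \<epsilon>1 \<Delta> u D1) ([CV], {})) (\<lambda>s. exp_mech \<epsilon>1 \<Delta> u D1 (snd s))"
        unfolding dfs_sampling_def Let_def \<Delta>_def match_def ..
      have e2: "dfs_sampling \<epsilon>1 u m dsz attr f n V CV D2 = bind_pmf (dfs_loop n (2 * card (contexts m dsz) + 2) match (exp_mech \<epsilon>1 \<Delta> u D2) ([CV], {})) (\<lambda>s. exp_mech \<epsilon>1 \<Delta> u D2 (snd s))"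
        unfolding dfs_sampling_def Let_def \<Delta>_def match2[symmetric] ..
      show ?thesis unfolding e1 e2 by (rule lb)
    qed
    also have "\<dots> \<le> exp ((2 * real n + 2) * \<epsilon>1) * pmf (dfs_sampling \<epsilon>1 u m dsz attr f n V CV D2) y"
      by (rule mult_right_mono[OF ex]) simp
    finally show ?thesis .
  qed
  show "measure_pmf.prob (dfs_sampling \<epsilon>1 u m dsz attr f n V CV D1) S
      \<le> exp ((2 * real n + 2) * \<epsilon>1) * measure_pmf.prob (dfs_sampling \<epsilon>1 u m dsz attr f n V CV D2) S"
    by (rule prob_bound[OF _ pw]) simp
qed

end
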